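(* Let $s\in\{0,\tfrac12\}$, $\lambda\in\mathbb{C}$, and let $\sigma\in\mathrm{Aut}(\mathfrak{L}^s_\lambda)$ be normalized, i.e. there are $\epsilon\in\{1,-1\}$, $\alpha,\mu\in\mathbb{C}\setminus\{0\}$, $\beta\in\mathbb{C}$ with $\sigma(L_m)=\epsilon\alpha^mL_{\epsilon m}+m\alpha^m\beta I_{\epsilon m}$ and $\sigma(I_m)=\alpha^m\mu I_{\epsilon m}$ for all $m\in\mathbb{Z}$. Then for every $p\in s+\mathbb{Z}$, $\sigma(G_p)\in\mathbb{C}G_{\epsilon p}+\mathrm{span}_{\mathbb{C}}\{H_q:q\in s+\mathbb{Z}\}$.
   Context: For $s\in\{0,\tfrac12\}$ and $\lambda\in\mathbb{C}$, $\mathfrak{L}^s_\lambda$ is the complex Lie superalgebra with basis $\{L_m,I_m,G_p,H_p : m\in\mathbb{Z},\ p\in s+\mathbb{Z}\}$, even part spanned by the $L_m,I_m$, odd part spanned by the $G_p,H_p$, with brackets $[L_m,L_n]=(m-n)L_{m+n}$, $[L_m,I_n]=(m-n)I_{m+n}$, $[L_m,H_p]=(\tfrac m2-p)H_{m+p}$, $[L_m,G_p]=(\tfrac m2-p)G_{m+p}+\lambda(m+1)H_{m+p}$, $[I_m,G_p]=(m-2p)H_{m+p}$, $[G_p,G_q]=I_{p+q}$, plus super-antisymmetry; all other brackets of basis elements are zero. $\mathrm{Aut}(\mathfrak{L})$ is the group of bijective parity-preserving linear maps $\sigma$ with $\sigma([x,y])=[\sigma(x),\sigma(y)]$. *)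

theory Defs
  imports Complex_Main "HOL-Library.Function_Algebras"
begin

text \<open>Basis of the Lie superalgebra.  Odd basis elements are indexed by
  twice their (half-)integer index: G n stands for G_p with p = n/2,
  likewise H n stands for H_p with p = n/2.\<close>
datatype sb = L int | I int | G int | H int

type_synonym vec = "sb \<Rightarrow> complex"

definition bas :: "sb \<Rightarrow> vec" where
  "bas b = (\<lambda>c. if c = b then 1 else 0)"

definition scal :: "complex \<Rightarrow> vec \<Rightarrow> vec" where
  "scal c v = (\<lambda>b. c * v b)"

definition supp :: "vec \<Rightarrow> sb set" where
  "supp v = {b. v b \<noteq> 0}"

definition halfidx :: "real \<Rightarrow> int \<Rightarrow> bool" where
  "halfidx s n \<longleftrightarrow> (\<exists>k::int. real_of_int n / 2 = s + real_of_int k)"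

fun adm :: "real \<Rightarrow> sb \<Rightarrow> bool" where
  "adm s (L m) = True"
| "adm s (I m) = True"
| "adm s (G n) = halfidx s n"
| "adm s (H n) = halfidx s n"

fun is_even :: "sb \<Rightarrow> bool" where
  "is_even (L m) = True"
| "is_even (I m) = True"
| "is_even (G n) = False"
| "is_even (H n) = False"

definition carrier_sa :: "real \<Rightarrow> vec set" where
  "carrier_sa s = {v. finite (supp v) \<and> (\<forall>b \<in> supp v. adm s b)}"

definition even_part :: "real \<Rightarrow> vec set" where
  "even_part s = {v \<in> carrier_sa s. \<forall>b \<in> supp v. is_even b}"

definition odd_part :: "real \<Rightarrow> vec set" where
  "odd_part s = {v \<in> carrier_sa s. \<forall>b \<in> supp v. \<not> is_even b}"

fun brb :: "complex \<Rightarrow> sb \<Rightarrow> sb \<Rightarrow> vec" where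
  "brb lam (L m) (L n) = scal (of_int (m - n)) (bas (L (m + n)))"
| "brb lam (L m) (I n) = scal (of_int (m - n)) (bas (I (m + n)))"
| "brb lam (I n) (L m) = scal (- of_int (m - n)) (bas (I (m + n)))"
| "brb lam (L m) (H n) = scal (of_int m / 2 - of_int n / 2) (bas (H (2 * m + n)))"
| "brb lam (H n) (L m) = scal (- (of_int m / 2 - of_int n / 2)) (bas (H (2 * m + n)))"
| "brb lam (L m) (G n) = scal (of_int m / 2 - of_int n / 2) (bas (G (2 * m + n)))
      + scal (lam * of_int (m + 1)) (bas (H (2 * m + n)))"
| "brb lam (G n) (L m) = - (scal (of_int m / 2 - of_int n / 2) (bas (G (2 * m + n)))
      + scal (lam * of_int (m + 1)) (bas (H (2 * m + n))))"
| "brb lam (I m) (G n) = scal (of_int (m - n)) (bas (H (2 * m + n)))"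
| "brb lam (G n) (I m) = scal (- of_int (m - n)) (bas (H (2 * m + n)))"
| "brb lam (G n) (G k) = bas (I ((n + k) div 2))"
| "brb lam _ _ = 0"

definition br :: "complex \<Rightarrow> vec \<Rightarrow> vec \<Rightarrow> vec" where
  "br lam x y = (\<lambda>c. \<Sum>a\<in>supp x. \<Sum>b\<in>supp y. x a * y b * brb lam a b c)"

definition is_aut :: "real \<Rightarrow> complex \<Rightarrow> (vec \<Rightarrow> vec) \<Rightarrow> bool" where
  "is_aut s lam \<sigma> \<longleftrightarrow>
     bij_betw \<sigma> (carrier_sa s) (carrier_sa s)
   \<and> (\<forall>x \<in> carrier_sa s. \<forall>y \<in> carrier_sa s. \<sigma> (x + y) = \<sigma> x + \<sigma> y)
   \<and> (\<forall>c. \<forall>x \<in> carrier_sa s. \<sigma> (scal c x) = scal c (\<sigma> x))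
   \<and> \<sigma> ` even_part s \<subseteq> even_part s
   \<and> \<sigma> ` odd_part s \<subseteq> odd_part s
   \<and> (\<forall>x \<in> carrier_sa s. \<forall>y \<in> carrier_sa s. \<sigma> (br lam x y) = br lam (\<sigma> x) (\<sigma> y))"

end

theory Submission
  imports Defs
begin

lemma module_scal: "module scal"
  by unfold_locales (auto simp: scal_def algebra_simps)

lemma sum_apply_fun: "finite A \<Longrightarrow> (sum f A :: vec) c = (\<Sum>a\<in>A. f a c)"
  by (induction A rule: finite_induct) auto

lemma supp_bas[simp]: "supp (bas b) = {b}"
  by (auto simp: supp_def bas_def)

lemma supp_scal_bas: "c \<noteq> 0 \<Longrightarrow> supp (scal c (bas b)) = {b}"
  by (auto simp: supp_def bas_def scal_def)

lemma br_single: "supp x = {a} \<Longrightarrow> br lam x y c = x a * (\<Sum>b\<in>supp y. y b * brb lam a b c)"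
  by (simp add: br_def sum_distrib_left mult.assoc)

lemma br_bas: "br lam (bas a) (bas b) = brb lam a b"
  by (rule ext) (simp add: br_def, simp add: bas_def)

lemma carrier_scal_bas: "adm s b \<Longrightarrow> scal c (bas b) \<in> carrier_sa s"
proof -
  assume "adm s b"
  have "supp (scal c (bas b)) \<subseteq> {b}" by (auto simp: supp_def scal_def bas_def)
  then show ?thesis using \<open>adm s b\<close> finite_subset by (auto simp: carrier_sa_def)
qed

lemma carrier_bas: "adm s b \<Longrightarrow> bas b \<in> carrier_sa s"
  by (auto simp: carrier_sa_def)

lemma brb_I_G: "brb lam (I k) b (G q) = 0"
  by (cases b) (auto simp: scal_def bas_def)

lemma brb_L0_G: "brb lam (L 0) b (G q) = (if b = G q then - of_int q / 2 else 0)"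
  by (cases b) (auto simp: scal_def bas_def)

lemma br_I_G: "supp x = {I k} \<Longrightarrow> br lam x y (G q) = 0"
  by (simp add: br_single brb_I_G)

lemma br_L0_G:
  assumes "supp x = {L 0}" "finite (supp y)"
  shows "br lam x y (G q) = x (L 0) * (y (G q) * (- of_int q / 2))"
proof -
  have "(\<Sum>b\<in>supp y. y b * brb lam (L 0) b (G q))
      = (\<Sum>b\<in>supp y. if b = G q then y (G q) * (- of_int q / 2) else 0)"
    by (rule sum.cong) (auto simp: brb_L0_G)
  also have "\<dots> = y (G q) * (- of_int q / 2)"
    using assms(2) by (auto simp: supp_def)
  finally show ?thesis using assms by (simp add: br_single)
qed

lemma vec_span:
  assumes "finite (supp v)" "supp v \<subseteq> S"
  shows "v \<in> module.span scal (bas ` S)"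
proof -
  interpret module scal by (rule module_scal)
  have "v = (\<Sum>b\<in>supp v. scal (v b) (bas b))"
  proof (rule ext)
    fix c
    have "(\<Sum>b\<in>supp v. scal (v b) (bas b)) c = (\<Sum>b\<in>supp v. v b * (if c = b then 1 else 0))"
      using assms(1) by (simp add: sum_apply_fun scal_def bas_def)
    also have "\<dots> = (\<Sum>b\<in>supp v. if b = c then v c else 0)"
      by (rule sum.cong) auto
    also have "\<dots> = v c" using assms(1) by (auto simp: supp_def)
    finally show "v c = (\<Sum>b\<in>supp v. scal (v b) (bas b)) c" by simp
  qed
  also have "\<dots> \<in> span (bas ` S)"
    using assms(2) by (intro span_sum span_scale span_base) auto
  finally show ?thesis .
qed

theorem lemma3p5:
  fixes s :: real and lam :: complex and \<sigma> :: "vec \<Rightarrow> vec"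
    and \<epsilon> :: int and \<alpha> \<mu> \<beta> :: complex
  assumes "s = 0 \<or> s = 1/2"
    and "is_aut s lam \<sigma>"
    and "\<epsilon> = 1 \<or> \<epsilon> = -1"
    and "\<alpha> \<noteq> 0" and "\<mu> \<noteq> 0"
    and "\<And>m. \<sigma> (bas (L m)) = scal (of_int \<epsilon> * \<alpha> powi m) (bas (L (\<epsilon> * m)))
                              + scal (of_int m * \<alpha> powi m * \<beta>) (bas (I (\<epsilon> * m)))"
    and "\<And>m. \<sigma> (bas (I m)) = scal (\<alpha> powi m * \<mu>) (bas (I (\<epsilon> * m)))"
  shows "\<forall>n. halfidx s n \<longrightarrow>
           (\<exists>c. \<sigma> (bas (G n)) - scal c (bas (G (\<epsilon> * n)))
                  \<in> module.span scal (bas ` {H q | q. halfidx s q}))"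
proof (intro allI impI)
  fix n assume hn: "halfidx s n"
  note aut = assms(2)[unfolded is_aut_def]
  have add: "\<And>x y. x \<in> carrier_sa s \<Longrightarrow> y \<in> carrier_sa s \<Longrightarrow> \<sigma> (x + y) = \<sigma> x + \<sigma> y"
    using aut[THEN conjunct2, THEN conjunct1] by blast
  have sc: "\<And>c x. x \<in> carrier_sa s \<Longrightarrow> \<sigma> (scal c x) = scal c (\<sigma> x)"
    using aut[THEN conjunct2, THEN conjunct2, THEN conjunct1] by blast
  have hom: "\<And>x y. x \<in> carrier_sa s \<Longrightarrow> y \<in> carrier_sa s \<Longrightarrow> \<sigma> (br lam x y) = br lam (\<sigma> x) (\<sigma> y)"
    using aut[THEN conjunct2, THEN conjunct2, THEN conjunct2, THEN conjunct2, THEN conjunct2] by blast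
  have odd: "\<sigma> ` odd_part s \<subseteq> odd_part s"
    using aut[THEN conjunct2, THEN conjunct2, THEN conjunct2, THEN conjunct2, THEN conjunct1] by blast
  have ssupp: "supp (\<sigma> (bas (I m))) = {I (\<epsilon> * m)}" for m
    using assms(4,5,7) by (simp add: supp_scal_bas)
  have Hnog: "\<sigma> (bas (H k)) (G q) = 0" if hk: "halfidx s k" for k q
  proof -
    define m :: int where "m = (if k = 0 then 1 else 0)"
    define k' where "k' = k - 2 * m"
    have ne: "(of_int (3 * m - k) :: complex) \<noteq> 0" by (auto simp: m_def)
    obtain j where j: "real_of_int k / 2 = s + real_of_int j" using hk unfolding halfidx_def by blast
    have "real_of_int k' / 2 = s + real_of_int (j - m)" using j unfolding k'_def
      by (simp add: field_simps)
    hence hk': "halfidx s k'" unfolding halfidx_def by blast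
    have eq: "br lam (bas (I m)) (bas (G k')) = scal (of_int (3 * m - k)) (bas (H k))"
      by (simp add: br_bas k'_def algebra_simps)
    define X where "X = br lam (bas (I m)) (bas (G k'))"
    have Xc: "X \<in> carrier_sa s" unfolding X_def eq using hk by (simp add: carrier_scal_bas)
    have e1: "bas (H k) = scal (1 / of_int (3 * m - k)) X"
      using ne unfolding X_def eq by (rule_tac ext) (simp add: scal_def)
    have "\<sigma> (bas (H k)) = scal (1 / of_int (3 * m - k)) (\<sigma> X)"
      by (subst e1) (rule sc[OF Xc])
    also have "\<sigma> X = br lam (\<sigma> (bas (I m))) (\<sigma> (bas (G k')))"
      unfolding X_def using hom carrier_bas[of s "I m"] carrier_bas[of s "G k'"] hk' by simp
    finally have "\<sigma> (bas (H k)) = scal (1 / of_int (3 * m - k)) (br lam (\<sigma> (bas (I m))) (\<sigma> (bas (G k'))))" .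
    thus ?thesis using br_I_G[OF ssupp] by (simp add: scal_def)
  qed
  define w where "w = \<sigma> (bas (G n))"
  have L0: "\<sigma> (bas (L 0)) = scal (of_int \<epsilon>) (bas (L 0))"
    using assms(6)[of 0] by (auto simp: scal_def bas_def)
  have eps0: "(of_int \<epsilon> :: complex) \<noteq> 0" using assms(3) by auto
  have "bas (G n) \<in> odd_part s" using hn by (auto simp: odd_part_def carrier_sa_def)
  hence wodd: "w \<in> odd_part s" using odd w_def by blast
  have wfin: "finite (supp w)" using wodd by (simp add: odd_part_def carrier_sa_def)
  have wG: "w (G q) = 0" if "q \<noteq> \<epsilon> * n" for q
  proof (rule ccontr)
    assume nz: "w (G q) \<noteq> 0"
    have br1: "br lam (bas (L 0)) (bas (G n)) = scal (- of_int n / 2) (bas (G n)) + scal lam (bas (H n))"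
      by (simp add: br_bas)
    have "\<sigma> (br lam (bas (L 0)) (bas (G n))) = scal (- of_int n / 2) w + scal lam (\<sigma> (bas (H n)))"
      unfolding br1 w_def
      by (subst add) (auto intro!: carrier_scal_bas simp: hn sc carrier_bas)
    moreover have "\<sigma> (br lam (bas (L 0)) (bas (G n))) = br lam (scal (of_int \<epsilon>) (bas (L 0))) w"
      unfolding w_def using hom[of "bas (L 0)" "bas (G n)"] hn by (simp add: carrier_bas L0)
    ultimately have "br lam (scal (of_int \<epsilon>) (bas (L 0))) w (G q) = (- of_int n / 2) * w (G q)"
      using Hnog[OF hn, of q] by (simp add: scal_def)
    hence "of_int \<epsilon> * (w (G q) * (- of_int q / 2)) = (- of_int n / 2) * w (G q)"
      using br_L0_G[OF supp_scal_bas[OF eps0] wfin] by (simp add: scal_def bas_def)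
    hence "(of_int (\<epsilon> * q) :: complex) = of_int n" using nz
      by (simp add: field_simps)
    hence "\<epsilon> * q = n" by (simp only: of_int_eq_iff)
    hence "q = \<epsilon> * n" using assms(3) by auto
    thus False using that by simp
  qed
  define v where "v = w - scal (w (G (\<epsilon> * n))) (bas (G (\<epsilon> * n)))"
  have vsub: "supp v \<subseteq> supp w" unfolding v_def
    by (auto simp: supp_def scal_def bas_def split: if_splits)
  have fin: "finite (supp v)" using wodd vsub finite_subset
    by (auto simp: odd_part_def carrier_sa_def)
  have "supp v \<subseteq> {H q | q. halfidx s q}"
  proof
    fix b assume b: "b \<in> supp v"
    hence bw: "b \<in> supp w" using vsub by blast
    hence "\<not> is_even b" "adm s b" using wodd by (auto simp: odd_part_def carrier_sa_def)
    moreover have "\<forall>q. b \<noteq> G q"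
    proof (intro allI notI)
      fix q assume "b = G q"
      with b show False using wG[of q]
        by (cases "q = \<epsilon> * n") (auto simp: v_def supp_def scal_def bas_def)
    qed
    ultimately show "b \<in> {H q | q. halfidx s q}" by (cases b) auto
  qed
  hence "v \<in> module.span scal (bas ` {H q | q. halfidx s q})" using vec_span fin by blast
  thus "\<exists>c. \<sigma> (bas (G n)) - scal c (bas (G (\<epsilon> * n))) \<in> module.span scal (bas ` {H q | q. halfidx s q})"
    unfolding v_def w_def by blast
qed

end
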